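(* Let $K$ be a field, $X$ a finite connected poset, and $\varphi$ a Lie automorphism of $I(X,K)$. There exist a bijection $\theta:B\to B$ with $\theta(B_i)\subseteq B_i$ for all $i\ge1$ and a map $\sigma:X^2_<\to K^*$ such that $\widetilde\varphi(e_{xy})=\sigma(x,y)\theta(e_{xy})$ for every $e_{xy}\in B$.
   Context: $I(X,K)$ is the incidence algebra: functions $f:X\times X\to K$ with $f(x,y)=0$ unless $x\le y$, product $(fg)(x,y)=\sum_{x\le t\le y}f(x,t)g(t,y)$; $e_{xy}$ ($x\le y$) is the basis element equal to $1$ at $(x,y)$ and $0$ elsewhere. A Lie automorphism is a bijective linear map preserving $[f,g]=fg-gf$. $B=\{e_{xy}:x<y\}$, $X^2_<=\{(x,y):x<y\}$. Let $l(\lfloor x,y\rfloor)$ be the maximum length of a chain in $\{z:x\le z\le y\}$; $B_i=\{e_{xy}\in B: l(\lfloor x,y\rfloor)\ge i\}$; $L_i=\mathrm{span}_K\{e_{xy}: l(\lfloor x,y\rfloor)=i\}$ ($i\ge0$). $\widetilde\varphi$ is the linear map sending $e_{xy}\in L_i$ to the $L_i$-component of $\varphi(e_{xy})$ in $I(X,K)=\bigoplus_iL_i$. Connected means any two elements are joined by a sequence in which consecutive elements are in a covering relation. *)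

theory Defs
  imports Main
begin

text \<open>The finite poset X is the type 'a (class order, finite); elements of
the incidence algebra I(X,K) are functions f :: 'a => 'a => 'k vanishing off
the relation x \<le> y.\<close>

definition incidence_algebra :: "('a::order \<Rightarrow> 'a \<Rightarrow> 'k::field) set" where
  "incidence_algebra = {f. \<forall>x y. \<not> x \<le> y \<longrightarrow> f x y = 0}"

definition inc_mult :: "('a::{order,finite} \<Rightarrow> 'a \<Rightarrow> 'k::field) \<Rightarrow> ('a \<Rightarrow> 'a \<Rightarrow> 'k) \<Rightarrow> 'a \<Rightarrow> 'a \<Rightarrow> 'k" where
  "inc_mult f g = (\<lambda>x y. \<Sum>t\<in>{t. x \<le> t \<and> t \<le> y}. f x t * g t y)"

definition lie_bracket :: "('a::{order,finite} \<Rightarrow> 'a \<Rightarrow> 'k::field) \<Rightarrow> ('a \<Rightarrow> 'a \<Rightarrow> 'k) \<Rightarrow> 'a \<Rightarrow> 'a \<Rightarrow> 'k" where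
  "lie_bracket f g = (\<lambda>x y. inc_mult f g x y - inc_mult g f x y)"

definition inc_scale :: "'k::field \<Rightarrow> ('a \<Rightarrow> 'a \<Rightarrow> 'k) \<Rightarrow> 'a \<Rightarrow> 'a \<Rightarrow> 'k" where
  "inc_scale c f = (\<lambda>x y. c * f x y)"

definition inc_add :: "('a \<Rightarrow> 'a \<Rightarrow> 'k::field) \<Rightarrow> ('a \<Rightarrow> 'a \<Rightarrow> 'k) \<Rightarrow> 'a \<Rightarrow> 'a \<Rightarrow> 'k" where
  "inc_add f g = (\<lambda>x y. f x y + g x y)"

definition e_elem :: "'a \<Rightarrow> 'a \<Rightarrow> 'a \<Rightarrow> 'a \<Rightarrow> 'k::field" where
  "e_elem x y = (\<lambda>u v. if u = x \<and> v = y then 1 else 0)"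

definition lie_automorphism :: "(('a::{order,finite} \<Rightarrow> 'a \<Rightarrow> 'k::field) \<Rightarrow> ('a \<Rightarrow> 'a \<Rightarrow> 'k)) \<Rightarrow> bool" where
  "lie_automorphism \<phi> \<longleftrightarrow>
     bij_betw \<phi> incidence_algebra incidence_algebra \<and>
     (\<forall>f\<in>incidence_algebra. \<forall>g\<in>incidence_algebra. \<phi> (inc_add f g) = inc_add (\<phi> f) (\<phi> g)) \<and>
     (\<forall>c. \<forall>f\<in>incidence_algebra. \<phi> (inc_scale c f) = inc_scale c (\<phi> f)) \<and>
     (\<forall>f\<in>incidence_algebra. \<forall>g\<in>incidence_algebra. \<phi> (lie_bracket f g) = lie_bracket (\<phi> f) (\<phi> g))"

definition covers :: "'a::order \<Rightarrow> 'a \<Rightarrow> bool" where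
  "covers x y \<longleftrightarrow> x < y \<and> \<not> (\<exists>z. x < z \<and> z < y)"

definition poset_connected :: "'a::order itself \<Rightarrow> bool" where
  "poset_connected _ \<longleftrightarrow> (\<forall>x y::'a. (\<lambda>a b. covers a b \<or> covers b a)\<^sup>*\<^sup>* x y)"

definition is_chain :: "'a::order set \<Rightarrow> bool" where
  "is_chain C \<longleftrightarrow> (\<forall>a\<in>C. \<forall>b\<in>C. a \<le> b \<or> b \<le> a)"

definition interval_length :: "'a::{order,finite} \<Rightarrow> 'a \<Rightarrow> nat" where
  "interval_length x y = Max {card C | C. C \<subseteq> {x..y} \<and> is_chain C} - 1"

definition B_set :: "('a::{order,finite} \<Rightarrow> 'a \<Rightarrow> 'k::field) set" where
  "B_set = {e_elem x y | x y. x < y}"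

definition B_i :: "nat \<Rightarrow> ('a::{order,finite} \<Rightarrow> 'a \<Rightarrow> 'k::field) set" where
  "B_i i = {e_elem x y | x y. x < y \<and> interval_length x y \<ge> i}"

definition L_comp :: "nat \<Rightarrow> ('a::{order,finite} \<Rightarrow> 'a \<Rightarrow> 'k::field) \<Rightarrow> 'a \<Rightarrow> 'a \<Rightarrow> 'k" where
  "L_comp i f = (\<lambda>u v. if u \<le> v \<and> interval_length u v = i then f u v else 0)"

text \<open>\<open>\<phi>~\<close>: linear map sending e_xy (in L_i, i = l(x,y)) to the L_i-component of \<phi>(e_xy).\<close>
definition phi_tilde :: "(('a::{order,finite} \<Rightarrow> 'a \<Rightarrow> 'k::field) \<Rightarrow> ('a \<Rightarrow> 'a \<Rightarrow> 'k)) \<Rightarrow> ('a \<Rightarrow> 'a \<Rightarrow> 'k) \<Rightarrow> 'a \<Rightarrow> 'a \<Rightarrow> 'k" where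
  "phi_tilde \<phi> f = (\<lambda>u v. \<Sum>p\<in>{(x,y). x \<le> y}. f (fst p) (snd p) *
        L_comp (interval_length (fst p) (snd p)) (\<phi> (e_elem (fst p) (snd p))) u v)"

end

theory Submission
  imports Defs
begin


abbreviation il where "il \<equiv> interval_length"

lemma il_set_finite: "finite {card C | C. C \<subseteq> {x..y} \<and> is_chain (C::'a::{order,finite} set)}"
proof -
  have "{card C | C. C \<subseteq> {x..y} \<and> is_chain (C::'a set)} \<subseteq> {0..card (UNIV::'a set)}"
    by (auto intro!: card_mono)
  then show ?thesis by (rule finite_subset) simp
qed

lemma il_card:
  fixes C :: "'a::{order,finite} set"
  assumes "C \<subseteq> {x..y}" "is_chain C"
  shows "card C \<le> il x y + 1"
proof -
  have "card C \<le> Max {card C | C. C \<subseteq> {x..y} \<and> is_chain C}"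
    using assms il_set_finite by (intro Max_ge) auto
  then show ?thesis unfolding interval_length_def by linarith
qed

lemma il_ex:
  fixes x y :: "'a::{order,finite}"
  assumes "x \<le> y"
  shows "\<exists>C. C \<subseteq> {x..y} \<and> is_chain C \<and> card C = il x y + 1"
proof -
  let ?S = "{card C | C. C \<subseteq> {x..y} \<and> is_chain (C::'a set)}"
  have "{x} \<subseteq> {x..y}" "is_chain {x}" using assms by (auto simp: is_chain_def)
  then have "1 \<in> ?S" by force
  then have ne: "?S \<noteq> {}" and ge: "1 \<le> Max ?S" using il_set_finite[of x y] by (auto intro: Max_ge)
  have "Max ?S \<in> ?S" using il_set_finite[of x y] ne by (rule Max_in)
  then obtain C where "C \<subseteq> {x..y}" "is_chain C" "card C = Max ?S" by auto
  then show ?thesis using ge unfolding interval_length_def by (intro exI[of _ C]) auto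
qed

lemma il_refl: "il x (x::'a::{order,finite}) = 0"
proof -
  obtain C where C: "C \<subseteq> {x..x}" "card C = il x x + 1" using il_ex[of x x] by auto
  have "card C \<le> card {x}" using C(1) by (intro card_mono) auto
  then show ?thesis using C by simp
qed

lemma il_pos:
  fixes x y :: "'a::{order,finite}"
  assumes "x < y" shows "1 \<le> il x y"
proof -
  have "card {x,y} \<le> il x y + 1" using assms by (intro il_card) (auto simp: is_chain_def)
  then show ?thesis using assms by simp
qed

lemma il_super:
  fixes a t b :: "'a::{order,finite}"
  assumes "a \<le> t" "t \<le> b"
  shows "il a t + il t b \<le> il a b"
proof -
  obtain C1 where C1: "C1 \<subseteq> {a..t}" "is_chain C1" "card C1 = il a t + 1" using il_ex assms(1) by blast
  obtain C2 where C2: "C2 \<subseteq> {t..b}" "is_chain C2" "card C2 = il t b + 1" using il_ex assms(2) by blast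
  have sub: "C1 \<union> C2 \<subseteq> {a..b}"
  proof
    fix z assume "z \<in> C1 \<union> C2"
    then have "a \<le> z \<and> z \<le> t \<or> t \<le> z \<and> z \<le> b" using C1(1) C2(1) by auto
    then show "z \<in> {a..b}" using assms by (auto intro: order_trans)
  qed
  have le: "p \<le> q" if "p \<in> C1" "q \<in> C2" for p q
  proof -
    have "p \<le> t" "t \<le> q" using that C1(1) C2(1) by auto
    then show ?thesis by (rule order_trans)
  qed
  have ch: "is_chain (C1 \<union> C2)" using C1(2) C2(2) le unfolding is_chain_def
    by blast
  have "C1 \<inter> C2 \<subseteq> {t}"
  proof
    fix z assume "z \<in> C1 \<inter> C2"
    then have "z \<le> t" "t \<le> z" using C1(1) C2(1) by auto
    then show "z \<in> {t}" by simp
  qed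
  then have "card (C1 \<inter> C2) \<le> 1" using card_mono[of "{t}" "C1 \<inter> C2"] by simp
  moreover have "card C1 + card C2 = card (C1 \<union> C2) + card (C1 \<inter> C2)"
    by (rule card_Un_Int) auto
  moreover have "card (C1 \<union> C2) \<le> il a b + 1" using sub ch by (rule il_card)
  ultimately show ?thesis using C1 C2 by linarith
qed

lemma chain_least:
  fixes C :: "'a::{order,finite} set"
  assumes "is_chain C" "C \<noteq> {}"
  shows "\<exists>m\<in>C. \<forall>c\<in>C. m \<le> c"
proof -
  obtain m where m: "m \<in> C" "\<forall>b\<in>C. b \<le> m \<longrightarrow> m = b" using finite_has_minimal[of C] assms by auto
  have "\<forall>c\<in>C. m \<le> c" using m assms(1) unfolding is_chain_def by metis
  then show ?thesis using m by blast
qed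

lemma il_split:
  fixes u v :: "'a::{order,finite}"
  assumes "u \<le> v" "Suc k \<le> il u v" "1 \<le> k"
  shows "\<exists>t. u < t \<and> t < v \<and> k \<le> il t v"
proof -
  obtain C where C: "C \<subseteq> {u..v}" "is_chain C" "card C = il u v + 1" using il_ex assms(1) by blast
  have "C \<noteq> {}" using C assms by auto
  then obtain m where m: "m \<in> C" "\<forall>c\<in>C. m \<le> c" using chain_least C(2) by blast
  let ?C = "C - {m}"
  have cc: "card ?C = il u v" using C m by simp
  then have "?C \<noteq> {}" using assms by (metis card.empty not_less_eq_eq zero_le)
  moreover have "is_chain ?C" using C(2) unfolding is_chain_def by auto
  ultimately obtain t where t: "t \<in> ?C" "\<forall>c\<in>?C. t \<le> c" using chain_least by blast
  have "u < t" using t m C(1) by (metis DiffE insertI1 atLeastAtMost_iff order_le_less order_le_less_trans subset_iff)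
  have sub: "?C \<subseteq> {t..v}" using t C(1) by (auto simp: subset_iff)
  have "card ?C \<le> il t v + 1" using sub \<open>is_chain ?C\<close> by (rule il_card)
  then have k: "k \<le> il t v" using cc assms by linarith
  have "t \<le> v" using t C(1) by auto
  moreover have "t \<noteq> v" using k assms(3) il_refl[of v] by auto
  ultimately show ?thesis using \<open>u < t\<close> k by auto
qed



definition Jk :: "nat \<Rightarrow> ('a::{order,finite} \<Rightarrow> 'a \<Rightarrow> 'k::field) set" where
  "Jk k = {f. \<forall>u v. f u v \<noteq> 0 \<longrightarrow> u \<le> v \<and> k \<le> il u v}"

lemma J0: "Jk 0 = incidence_algebra"
  unfolding Jk_def incidence_algebra_def by auto

lemma J_IA: "f \<in> Jk k \<Longrightarrow> f \<in> incidence_algebra"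
  unfolding Jk_def incidence_algebra_def by auto

lemma e_J: "u \<le> v \<Longrightarrow> k \<le> il u v \<Longrightarrow> e_elem u v \<in> Jk k"
  unfolding Jk_def e_elem_def by auto

lemma e_IA: "u \<le> v \<Longrightarrow> e_elem u v \<in> incidence_algebra"
  unfolding incidence_algebra_def e_elem_def by auto

lemma e_eq: "e_elem x y u v = (if u = x \<and> v = y then 1 else 0)"
  unfolding e_elem_def by simp

lemma e_inj:
  assumes "(e_elem x y :: 'a \<Rightarrow> 'a \<Rightarrow> 'k::field) = e_elem x' y'"
  shows "x = x' \<and> y = y'"
proof -
  have "(e_elem x y x y :: 'k) = e_elem x' y' x y" using assms by simp
  then show ?thesis unfolding e_eq by (auto split: if_splits)
qed

lemma IA_add: "f \<in> incidence_algebra \<Longrightarrow> g \<in> incidence_algebra \<Longrightarrow> inc_add f g \<in> incidence_algebra"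
  unfolding incidence_algebra_def inc_add_def by auto

lemma IA_scale: "f \<in> incidence_algebra \<Longrightarrow> inc_scale c f \<in> incidence_algebra"
  unfolding incidence_algebra_def inc_scale_def by auto

lemma J_add:
  assumes "f \<in> Jk k" "g \<in> Jk k" shows "inc_add f g \<in> Jk k"
  unfolding Jk_def
proof (intro CollectI allI impI)
  fix u v assume "inc_add f g u v \<noteq> 0"
  then have "f u v \<noteq> 0 \<or> g u v \<noteq> 0" unfolding inc_add_def by auto
  then show "u \<le> v \<and> k \<le> il u v" using assms unfolding Jk_def by blast
qed

lemma J_scale: "f \<in> Jk k \<Longrightarrow> inc_scale c f \<in> Jk k"
  unfolding Jk_def inc_scale_def by auto

lemma mult_J:
  assumes "f \<in> Jk p" "g \<in> Jk q"
  shows "inc_mult f g \<in> Jk (p + q)"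
  unfolding Jk_def
proof (intro CollectI allI impI)
  fix a b assume "inc_mult f g a b \<noteq> 0"
  then obtain t where t: "t \<in> {t. a \<le> t \<and> t \<le> b}" "f a t * g t b \<noteq> 0"
    unfolding inc_mult_def by (rule sum.not_neutral_contains_not_neutral)
  then have "a \<le> t \<and> p \<le> il a t" "t \<le> b \<and> q \<le> il t b" using assms unfolding Jk_def by auto
  then show "a \<le> b \<and> p + q \<le> il a b" using il_super[of a t b] by (auto intro: order_trans)
qed

lemma J_diff:
  assumes "f \<in> Jk k" "g \<in> Jk k" shows "(\<lambda>a b. f a b - g a b) \<in> Jk k"
  unfolding Jk_def
proof (intro CollectI allI impI)
  fix u v assume "f u v - g u v \<noteq> 0"
  then have "f u v \<noteq> 0 \<or> g u v \<noteq> 0" by auto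
  then show "u \<le> v \<and> k \<le> il u v" using assms unfolding Jk_def by blast
qed

lemma lb_J: "f \<in> Jk p \<Longrightarrow> g \<in> Jk q \<Longrightarrow> lie_bracket f g \<in> Jk (p + q)"
  unfolding lie_bracket_def using mult_J[of f p g q] mult_J[of g q f p]
  by (intro J_diff) (auto simp: add.commute)

lemma IA_lb: "f \<in> incidence_algebra \<Longrightarrow> g \<in> incidence_algebra \<Longrightarrow> lie_bracket f g \<in> incidence_algebra"
  using lb_J[of f 0 g 0] J0 by auto


lemma lb_J1:
  assumes "f \<in> incidence_algebra" "g \<in> incidence_algebra"
  shows "lie_bracket f g \<in> Jk 1"
  unfolding Jk_def
proof (intro CollectI allI impI)
  fix a b assume nz: "lie_bracket f g a b \<noteq> 0"
  have "lie_bracket f g \<in> incidence_algebra" using assms by (rule IA_lb)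
  then have ab: "a \<le> b" using nz unfolding incidence_algebra_def by auto
  have "a \<noteq> b"
  proof
    assume "a = b"
    then have "{t. a \<le> t \<and> t \<le> b} = {a}" by auto
    then have "lie_bracket f g a b = 0" using \<open>a = b\<close> unfolding lie_bracket_def inc_mult_def by simp
    then show False using nz by simp
  qed
  then show "a \<le> b \<and> 1 \<le> il a b" using ab il_pos[of a b] by (simp add: order_le_less)
qed

lemma lb_e:
  fixes u t v :: "'a::{order,finite}"
  assumes "u < t" "t < v"
  shows "lie_bracket (e_elem u t) (e_elem t v) = (e_elem u v :: 'a \<Rightarrow> 'a \<Rightarrow> 'k::field)"
proof (intro ext)
  fix a b :: 'a
  have 1: "inc_mult (e_elem u t) (e_elem t v) a b = (e_elem u v a b :: 'k)"
  proof -
    have "inc_mult (e_elem u t) (e_elem t v) a b =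
       (\<Sum>s\<in>{s. a \<le> s \<and> s \<le> b}. if s = t then (if a = u \<and> b = v then 1 else 0) else (0::'k))"
      unfolding inc_mult_def e_eq by (intro sum.cong) auto
    also have "\<dots> = (if t \<in> {s. a \<le> s \<and> s \<le> b} then (if a = u \<and> b = v then 1 else 0) else 0)"
      by (rule sum.delta) simp
    also have "\<dots> = e_elem u v a b" using assms unfolding e_eq by auto
    finally show ?thesis .
  qed
  have 2: "inc_mult (e_elem t v) (e_elem u t) a b = (0 :: 'k)"
    unfolding inc_mult_def e_eq using assms by (intro sum.neutral) auto
  show "lie_bracket (e_elem u t) (e_elem t v) a b = (e_elem u v a b :: 'k)"
    unfolding lie_bracket_def 1 2 by simp
qed

lemma lb_diag:
  fixes x y :: "'a::{order,finite}" and d :: "'a \<Rightarrow> 'a \<Rightarrow> 'k::field"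
  assumes "\<forall>a b. a \<noteq> b \<longrightarrow> d a b = 0" "x < y"
  shows "lie_bracket d (e_elem x y) = inc_scale (d x x - d y y) (e_elem x y)"
proof (intro ext)
  fix a b :: 'a
  have 1: "inc_mult d (e_elem x y) a b = (if a = x \<and> b = y then d x x else 0)"
  proof -
    have "inc_mult d (e_elem x y) a b =
       (\<Sum>s\<in>{s. a \<le> s \<and> s \<le> b}. if s = a then (if a = x \<and> b = y then d x x else 0) else 0)"
      unfolding inc_mult_def e_eq using assms(1) by (intro sum.cong) auto
    also have "\<dots> = (if a = x \<and> b = y then d x x else 0)"
      using assms(2) by (subst sum.delta) auto
    finally show ?thesis .
  qed
  have 2: "inc_mult (e_elem x y) d a b = (if a = x \<and> b = y then d y y else 0)"
  proof -
    have "inc_mult (e_elem x y) d a b =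
       (\<Sum>s\<in>{s. a \<le> s \<and> s \<le> b}. if s = b then (if a = x \<and> b = y then d y y else 0) else 0)"
      unfolding inc_mult_def e_eq using assms(1) by (intro sum.cong) auto
    also have "\<dots> = (if a = x \<and> b = y then d y y else 0)"
      using assms(2) by (subst sum.delta) auto
    finally show ?thesis .
  qed
  show "lie_bracket d (e_elem x y) a b = inc_scale (d x x - d y y) (e_elem x y) a b"
    unfolding lie_bracket_def inc_scale_def 1 2 e_eq by auto
qed

lemma lb_comp:
  fixes a f :: "'a::{order,finite} \<Rightarrow> 'a \<Rightarrow> 'k::field"
  assumes a: "a \<in> incidence_algebra" and f: "f \<in> Jk i" and i: "1 \<le> i"
    and uv: "u \<le> v" "il u v = i"
  shows "lie_bracket a f u v = (a u u - a v v) * f u v"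
proof -
  have "u \<noteq> v" using uv i il_refl[of u] by auto
  have 1: "inc_mult a f u v = a u u * f u v"
  proof -
    have "inc_mult a f u v = (\<Sum>s\<in>{s. u \<le> s \<and> s \<le> v}. if s = u then a u u * f u v else 0)"
      unfolding inc_mult_def
    proof (intro sum.cong refl)
      fix s assume s: "s \<in> {s. u \<le> s \<and> s \<le> v}"
      show "a u s * f s v = (if s = u then a u u * f u v else 0)"
      proof (cases "s = u")
        case False
        show ?thesis
        proof (rule ccontr)
          assume "\<not> ?thesis"
          then have nz: "a u s \<noteq> 0" "f s v \<noteq> 0" using False by auto
          then have "u \<le> s" "i \<le> il s v" using a f unfolding incidence_algebra_def Jk_def by auto
          then have "u < s" "i \<le> il s v" using False by auto
          then have "1 + i \<le> il u v" using il_super[of u s v] il_pos[of u s] s by auto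
          then show False using uv by simp
        qed
      qed simp
    qed
    also have "\<dots> = a u u * f u v" using uv by (subst sum.delta) auto
    finally show ?thesis .
  qed
  have 2: "inc_mult f a u v = f u v * a v v"
  proof -
    have "inc_mult f a u v = (\<Sum>s\<in>{s. u \<le> s \<and> s \<le> v}. if s = v then f u v * a v v else 0)"
      unfolding inc_mult_def
    proof (intro sum.cong refl)
      fix s assume s: "s \<in> {s. u \<le> s \<and> s \<le> v}"
      show "f u s * a s v = (if s = v then f u v * a v v else 0)"
      proof (cases "s = v")
        case False
        show ?thesis
        proof (rule ccontr)
          assume "\<not> ?thesis"
          then have nz: "f u s \<noteq> 0" "a s v \<noteq> 0" using False by auto
          then have "s \<le> v" "i \<le> il u s" using a f unfolding incidence_algebra_def Jk_def by auto
          then have "s < v" "i \<le> il u s" using False by auto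
          then have "i + 1 \<le> il u v" using il_super[of u s v] il_pos[of s v] s by auto
          then show False using uv by simp
        qed
      qed simp
    qed
    also have "\<dots> = f u v * a v v" using uv by (subst sum.delta) auto
    finally show ?thesis .
  qed
  have "lie_bracket a f u v = inc_mult a f u v - inc_mult f a u v" by (simp add: lie_bracket_def)
  also have "\<dots> = a u u * f u v - f u v * a v v" by (simp only: 1 2)
  also have "\<dots> = (a u u - a v v) * f u v" by (simp add: left_diff_distrib mult.commute[of "f u v"])
  finally show ?thesis .
qed

lemma decomp:
  fixes f :: "'a::{order,finite} \<Rightarrow> 'a \<Rightarrow> 'k::field"
  shows "f = (\<lambda>u v. \<Sum>p\<in>{p. f (fst p) (snd p) \<noteq> 0}. f (fst p) (snd p) * e_elem (fst p) (snd p) u v)"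
proof (intro ext)
  fix u v
  have "(\<Sum>p\<in>{p. f (fst p) (snd p) \<noteq> 0}. f (fst p) (snd p) * e_elem (fst p) (snd p) u v)
      = (\<Sum>p\<in>{p. f (fst p) (snd p) \<noteq> 0}. if p = (u,v) then f u v else 0)"
    by (intro sum.cong) (auto simp: e_eq)
  also have "\<dots> = f u v" by (subst sum.delta) auto
  finally show "f u v = (\<Sum>p\<in>{p. f (fst p) (snd p) \<noteq> 0}. f (fst p) (snd p) * e_elem (fst p) (snd p) u v)" by simp
qed



definition lie_endo :: "(('a::{order,finite} \<Rightarrow> 'a \<Rightarrow> 'k::field) \<Rightarrow> ('a \<Rightarrow> 'a \<Rightarrow> 'k)) \<Rightarrow> bool" where
  "lie_endo \<psi> \<longleftrightarrow> (\<forall>f\<in>incidence_algebra. \<psi> f \<in> incidence_algebra) \<and>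
     (\<forall>f\<in>incidence_algebra. \<forall>g\<in>incidence_algebra. \<psi> (inc_add f g) = inc_add (\<psi> f) (\<psi> g)) \<and>
     (\<forall>c. \<forall>f\<in>incidence_algebra. \<psi> (inc_scale c f) = inc_scale c (\<psi> f)) \<and>
     (\<forall>f\<in>incidence_algebra. \<forall>g\<in>incidence_algebra. \<psi> (lie_bracket f g) = lie_bracket (\<psi> f) (\<psi> g))"

lemma auto_endo:
  assumes "lie_automorphism \<phi>" shows "lie_endo \<phi>"
proof -
  have "\<phi> ` incidence_algebra = incidence_algebra" using assms unfolding lie_automorphism_def bij_betw_def by auto
  then show ?thesis using assms unfolding lie_automorphism_def lie_endo_def by blast
qed

lemma inv_endo:
  fixes \<phi> :: "('a::{order,finite} \<Rightarrow> 'a \<Rightarrow> 'k::field) \<Rightarrow> ('a \<Rightarrow> 'a \<Rightarrow> 'k)"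
  assumes "lie_automorphism \<phi>" shows "lie_endo (inv_into incidence_algebra \<phi>)"
proof -
  let ?A = "incidence_algebra :: ('a \<Rightarrow> 'a \<Rightarrow> 'k) set"
  let ?\<psi> = "inv_into ?A \<phi>"
  have bij: "bij_betw \<phi> ?A ?A" using assms unfolding lie_automorphism_def by auto
  have bij2: "bij_betw ?\<psi> ?A ?A" using bij by (rule bij_betw_inv_into)
  have m: "?\<psi> f \<in> ?A" if "f \<in> ?A" for f using bij2 that by (rule bij_betw_apply)
  have pi: "\<phi> (?\<psi> f) = f" if "f \<in> ?A" for f using bij that
    by (simp add: bij_betw_def f_inv_into_f)
  have ip: "?\<psi> (\<phi> f) = f" if "f \<in> ?A" for f using bij that
    by (simp add: bij_betw_def inv_into_f_f)
  have E: "lie_endo \<phi>" using assms by (rule auto_endo)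
  have add: "?\<psi> (inc_add f g) = inc_add (?\<psi> f) (?\<psi> g)" if "f \<in> ?A" "g \<in> ?A" for f g
  proof -
    have "\<phi> (inc_add (?\<psi> f) (?\<psi> g)) = inc_add f g"
      using E m pi that unfolding lie_endo_def by simp
    then have "?\<psi> (inc_add f g) = ?\<psi> (\<phi> (inc_add (?\<psi> f) (?\<psi> g)))" by simp
    also have "\<dots> = inc_add (?\<psi> f) (?\<psi> g)" using ip m that IA_add by blast
    finally show ?thesis .
  qed
  have scale: "?\<psi> (inc_scale c f) = inc_scale c (?\<psi> f)" if "f \<in> ?A" for f c
  proof -
    have "\<phi> (inc_scale c (?\<psi> f)) = inc_scale c f"
      using E m pi that unfolding lie_endo_def by simp
    then have "?\<psi> (inc_scale c f) = ?\<psi> (\<phi> (inc_scale c (?\<psi> f)))" by simp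
    also have "\<dots> = inc_scale c (?\<psi> f)" using ip m that IA_scale by blast
    finally show ?thesis .
  qed
  have br: "?\<psi> (lie_bracket f g) = lie_bracket (?\<psi> f) (?\<psi> g)" if "f \<in> ?A" "g \<in> ?A" for f g
  proof -
    have "\<phi> (lie_bracket (?\<psi> f) (?\<psi> g)) = lie_bracket f g"
      using E m pi that unfolding lie_endo_def by simp
    then have "?\<psi> (lie_bracket f g) = ?\<psi> (\<phi> (lie_bracket (?\<psi> f) (?\<psi> g)))" by simp
    also have "\<dots> = lie_bracket (?\<psi> f) (?\<psi> g)" using ip m that IA_lb by blast
    finally show ?thesis .
  qed
  show ?thesis unfolding lie_endo_def using m add scale br by blast
qed

lemma endo_zero:
  fixes \<psi> :: "('a::{order,finite} \<Rightarrow> 'a \<Rightarrow> 'k::field) \<Rightarrow> ('a \<Rightarrow> 'a \<Rightarrow> 'k)"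
  assumes "lie_endo \<psi>" shows "\<psi> (\<lambda>u v. 0) = (\<lambda>u v. 0)"
proof -
  let ?z = "(\<lambda>u v. 0) :: 'a \<Rightarrow> 'a \<Rightarrow> 'k"
  have z: "?z \<in> incidence_algebra" unfolding incidence_algebra_def by simp
  have e1: "inc_scale 0 ?z = ?z" unfolding inc_scale_def by simp
  have "\<psi> ?z = \<psi> (inc_scale 0 ?z)" by (simp only: e1)
  also have "\<dots> = inc_scale 0 (\<psi> ?z)" using assms z unfolding lie_endo_def by blast
  also have "\<dots> = ?z" unfolding inc_scale_def by simp
  finally show ?thesis .
qed

lemma sum_J:
  assumes "finite P" "\<forall>p\<in>P. h p \<in> Jk k"
  shows "(\<lambda>u v. \<Sum>p\<in>P. c p * h p u v) \<in> Jk k"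
  unfolding Jk_def
proof (intro CollectI allI impI)
  fix u v assume "(\<Sum>p\<in>P. c p * h p u v) \<noteq> 0"
  then obtain p where "p \<in> P" "c p * h p u v \<noteq> 0" by (rule sum.not_neutral_contains_not_neutral)
  then show "u \<le> v \<and> k \<le> il u v" using assms unfolding Jk_def by auto
qed

lemma endo_sum:
  fixes \<psi> :: "('a::{order,finite} \<Rightarrow> 'a \<Rightarrow> 'k::field) \<Rightarrow> ('a \<Rightarrow> 'a \<Rightarrow> 'k)"
  assumes E: "lie_endo \<psi>" and "finite P" "\<forall>p\<in>P. g p \<in> incidence_algebra"
  shows "\<psi> (\<lambda>u v. \<Sum>p\<in>P. c p * g p u v) = (\<lambda>u v. \<Sum>p\<in>P. c p * \<psi> (g p) u v)"
  using assms(2,3)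
proof (induction P rule: finite_induct)
  case empty
  then show ?case using endo_zero[OF E] by simp
next
  case (insert p P)
  have rest: "(\<lambda>u v. \<Sum>p\<in>P. c p * g p u v) \<in> incidence_algebra"
    using sum_J[of P g 0 c] insert J0 by auto
  have gp: "g p \<in> incidence_algebra" using insert by auto
  have "(\<lambda>u v. \<Sum>p\<in>insert p P. c p * g p u v) = inc_add (inc_scale (c p) (g p)) (\<lambda>u v. \<Sum>p\<in>P. c p * g p u v)"
    using insert unfolding inc_add_def inc_scale_def by auto
  moreover have "\<psi> (inc_add (inc_scale (c p) (g p)) (\<lambda>u v. \<Sum>p\<in>P. c p * g p u v))
     = inc_add (\<psi> (inc_scale (c p) (g p))) (\<psi> (\<lambda>u v. \<Sum>p\<in>P. c p * g p u v))"
    using E rest gp IA_scale unfolding lie_endo_def by blast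
  moreover have "\<psi> (inc_scale (c p) (g p)) = inc_scale (c p) (\<psi> (g p))"
    using E gp unfolding lie_endo_def by blast
  ultimately have "\<psi> (\<lambda>u v. \<Sum>p\<in>insert p P. c p * g p u v) = inc_add (inc_scale (c p) (\<psi> (g p))) (\<psi> (\<lambda>u v. \<Sum>p\<in>P. c p * g p u v))"
    by simp
  also have "\<dots> = (\<lambda>u v. \<Sum>p\<in>insert p P. c p * \<psi> (g p) u v)"
    using insert unfolding inc_add_def inc_scale_def by auto
  finally show ?case .
qed

lemma pres_from_basis:
  fixes \<psi> :: "('a::{order,finite} \<Rightarrow> 'a \<Rightarrow> 'k::field) \<Rightarrow> ('a \<Rightarrow> 'a \<Rightarrow> 'k)"
  assumes E: "lie_endo \<psi>"
    and B: "\<And>u v. u \<le> v \<Longrightarrow> k \<le> il u v \<Longrightarrow> \<psi> (e_elem u v) \<in> Jk k"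
    and f: "f \<in> Jk k"
  shows "\<psi> f \<in> Jk k"
proof -
  let ?P = "{p. f (fst p) (snd p) \<noteq> 0}"
  have fin: "finite ?P" by simp
  have Pp: "fst p \<le> snd p \<and> k \<le> il (fst p) (snd p)" if "p \<in> ?P" for p
    using that f unfolding Jk_def by auto
  have "\<psi> f = \<psi> (\<lambda>u v. \<Sum>p\<in>?P. f (fst p) (snd p) * e_elem (fst p) (snd p) u v)"
    by (rule arg_cong[where f=\<psi>, OF decomp])
  also have "\<dots> = (\<lambda>u v. \<Sum>p\<in>?P. f (fst p) (snd p) * \<psi> (e_elem (fst p) (snd p)) u v)"
    using Pp by (intro endo_sum[OF E fin]) (auto intro: e_IA)
  also have "\<dots> \<in> Jk k" using Pp B by (intro sum_J[OF fin]) auto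
  finally show ?thesis .
qed

lemma pres1:
  fixes \<psi> :: "('a::{order,finite} \<Rightarrow> 'a \<Rightarrow> 'k::field) \<Rightarrow> ('a \<Rightarrow> 'a \<Rightarrow> 'k)"
  assumes E: "lie_endo \<psi>" and f: "f \<in> Jk 1"
  shows "\<psi> f \<in> Jk 1"
proof (rule pres_from_basis[OF E _ f])
  fix u v :: 'a assume uv: "u \<le> v" "1 \<le> il u v"
  then have "u < v" using il_refl[of u] by (auto simp: order_le_less)
  have d: "\<forall>a b. a \<noteq> b \<longrightarrow> e_elem u u a b = (0::'k)" by (simp add: e_eq)
  have "lie_bracket (e_elem u u) (e_elem u v) = inc_scale (e_elem u u u u - e_elem u u v v) (e_elem u v :: 'a \<Rightarrow> 'a \<Rightarrow> 'k)"
    by (rule lb_diag[OF d \<open>u < v\<close>])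
  also have "\<dots> = e_elem u v" using \<open>u < v\<close> by (intro ext) (auto simp add: inc_scale_def e_eq)
  finally have eq: "lie_bracket (e_elem u u) (e_elem u v) = (e_elem u v :: 'a \<Rightarrow> 'a \<Rightarrow> 'k)" .
  have "\<psi> (e_elem u v) = lie_bracket (\<psi> (e_elem u u)) (\<psi> (e_elem u v))"
  proof -
    have "\<psi> (lie_bracket (e_elem u u) (e_elem u v)) = lie_bracket (\<psi> (e_elem u u)) (\<psi> (e_elem u v))"
      using E e_IA[OF order_refl[of u]] e_IA[OF uv(1)] unfolding lie_endo_def by blast
    then show ?thesis by (simp only: eq)
  qed
  also have "\<dots> \<in> Jk 1" using E e_IA[OF order_refl[of u]] e_IA[OF uv(1)] unfolding lie_endo_def
    by (intro lb_J1) blast+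
  finally show "\<psi> (e_elem u v) \<in> Jk 1" .
qed

lemma presk:
  fixes \<psi> :: "('a::{order,finite} \<Rightarrow> 'a \<Rightarrow> 'k::field) \<Rightarrow> ('a \<Rightarrow> 'a \<Rightarrow> 'k)"
  assumes E: "lie_endo \<psi>"
  shows "1 \<le> k \<Longrightarrow> f \<in> Jk k \<Longrightarrow> \<psi> f \<in> Jk k"
proof (induction k arbitrary: f)
  case 0 then show ?case by simp
next
  case (Suc k)
  show ?case
  proof (cases "k = 0")
    case True then show ?thesis using pres1[OF E] Suc by simp
  next
    case False
    show ?thesis
    proof (rule pres_from_basis[OF E _ Suc.prems(2)])
      fix u v :: 'a assume uv: "u \<le> v" "Suc k \<le> il u v"
      obtain t where t: "u < t" "t < v" "k \<le> il t v" using il_split[OF uv] False by auto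
      have "\<psi> (e_elem u v) = \<psi> (lie_bracket (e_elem u t) (e_elem t v))" by (simp add: lb_e[OF t(1,2)])
      also have "\<dots> = lie_bracket (\<psi> (e_elem u t)) (\<psi> (e_elem t v))"
        using E e_IA[OF less_imp_le[OF t(1)]] e_IA[OF less_imp_le[OF t(2)]] unfolding lie_endo_def by blast
      also have "\<dots> \<in> Jk (1 + k)"
      proof (rule lb_J)
        show "\<psi> (e_elem u t) \<in> Jk 1" using pres1[OF E e_J[OF less_imp_le[OF t(1)] il_pos[OF t(1)]]] .
        show "\<psi> (e_elem t v) \<in> Jk k" using Suc.IH[OF _ e_J[OF less_imp_le[OF t(2)] t(3)]] False by simp
      qed
      finally show "\<psi> (e_elem u v) \<in> Jk (Suc k)" by simp
    qed
  qed
qed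

lemma pres:
  fixes \<psi> :: "('a::{order,finite} \<Rightarrow> 'a \<Rightarrow> 'k::field) \<Rightarrow> ('a \<Rightarrow> 'a \<Rightarrow> 'k)"
  assumes E: "lie_endo \<psi>" and f: "f \<in> Jk k"
  shows "\<psi> f \<in> Jk k"
proof (cases "k = 0")
  case True then show ?thesis using E f J0 unfolding lie_endo_def by auto
next
  case False then show ?thesis using presk[OF E] f by simp
qed



lemma diag_surj:
  fixes \<phi> :: "('a::{order,finite} \<Rightarrow> 'a \<Rightarrow> 'k::field) \<Rightarrow> ('a \<Rightarrow> 'a \<Rightarrow> 'k)"
  assumes A: "lie_automorphism \<phi>"
  shows "\<exists>d\<in>incidence_algebra. (\<forall>a b. a \<noteq> b \<longrightarrow> d a b = 0) \<and> (\<forall>z. \<phi> d z z = h z)"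
proof -
  let ?A = "incidence_algebra :: ('a \<Rightarrow> 'a \<Rightarrow> 'k) set"
  define g where "g = (\<lambda>a b::'a. if a = b then h a else 0)"
  have gA: "g \<in> ?A" unfolding g_def incidence_algebra_def by auto
  have bij: "bij_betw \<phi> ?A ?A" using A unfolding lie_automorphism_def by auto
  define d0 where "d0 = inv_into ?A \<phi> g"
  have d0A: "d0 \<in> ?A" unfolding d0_def using bij_betw_apply[OF bij_betw_inv_into[OF bij] gA] .
  have pd0: "\<phi> d0 = g" unfolding d0_def using bij gA by (simp add: bij_betw_def f_inv_into_f)
  define d where "d = (\<lambda>a b::'a. if a = b then d0 a a else 0)"
  define n where "n = (\<lambda>a b::'a. if a = b then 0 else d0 a b)"
  have dA: "d \<in> ?A" unfolding d_def incidence_algebra_def by auto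
  have nJ: "n \<in> Jk 1" unfolding Jk_def
  proof (intro CollectI allI impI)
    fix a b assume "n a b \<noteq> 0"
    then have "a \<noteq> b" "d0 a b \<noteq> 0" unfolding n_def by (auto split: if_splits)
    then have "a < b" using d0A unfolding incidence_algebra_def by (auto simp: order_le_less)
    then show "a \<le> b \<and> 1 \<le> il a b" using il_pos by auto
  qed
  have nA: "n \<in> ?A" using nJ by (rule J_IA)
  have "d0 = inc_add d n" unfolding d_def n_def inc_add_def by (intro ext) auto
  then have "\<phi> d0 = inc_add (\<phi> d) (\<phi> n)" using A dA nA unfolding lie_automorphism_def by auto
  then have eq: "g = inc_add (\<phi> d) (\<phi> n)" using pd0 by simp
  have pnJ: "\<phi> n \<in> Jk 1" using pres[OF auto_endo[OF A] nJ] .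
  have "\<phi> n z z = 0" for z
  proof (rule ccontr)
    assume "\<phi> n z z \<noteq> 0"
    then have "1 \<le> il z z" using pnJ unfolding Jk_def by blast
    then show False using il_refl[of z] by simp
  qed
  then have "\<phi> d z z = h z" for z using fun_cong[OF fun_cong[OF eq, of z], of z]
    unfolding g_def inc_add_def by simp
  moreover have "\<forall>a b. a \<noteq> b \<longrightarrow> d a b = 0" unfolding d_def by simp
  ultimately show ?thesis using dA by blast
qed

lemma uniq_pair:
  fixes u v u' v' :: "'a::order"
  assumes "u < v" "u' < v'" "\<forall>h::'a \<Rightarrow> 'k::field. h u - h v = h u' - h v'"
  shows "u = u' \<and> v = v'"
proof -
  have h1: "(if u = u then 1 else 0) - (if v = u then 1 else 0) = (if u' = u then 1 else 0) - (if v' = u then (1::'k) else 0)"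
    using assms(3) by (rule allE[where x="\<lambda>z. if z = u then 1 else 0"]) simp
  have h2: "(if u = u' then 1 else 0) - (if v = u' then 1 else 0) = (if u' = u' then 1 else 0) - (if v' = u' then (1::'k) else 0)"
    using assms(3) by (rule allE[where x="\<lambda>z. if z = u' then 1 else 0"]) simp
  have h3: "(if u = v then 1 else 0) - (if v = v then 1 else 0) = (if u' = v then 1 else 0) - (if v' = v then (1::'k) else 0)"
    using assms(3) by (rule allE[where x="\<lambda>z. if z = v then 1 else 0"]) simp
  have uu: "u = u'"
  proof (rule ccontr)
    assume ne: "u \<noteq> u'"
    have "v' = u" using h1 ne assms(1) by (auto split: if_splits)
    moreover have "v = u'" using h2 ne assms(2) by (auto split: if_splits)
    ultimately show False using assms(1,2) by auto
  qed
  have "v' = v" using h3 uu assms(1) by (auto split: if_splits)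
  then show ?thesis using uu by simp
qed

definition goodp :: "(('a::{order,finite} \<Rightarrow> 'a \<Rightarrow> 'k::field) \<Rightarrow> ('a \<Rightarrow> 'a \<Rightarrow> 'k)) \<Rightarrow> 'a \<Rightarrow> 'a \<Rightarrow> 'a \<Rightarrow> 'a \<Rightarrow> bool" where
  "goodp \<phi> x y u v \<longleftrightarrow> u < v \<and> il u v = il x y \<and> \<phi> (e_elem x y) u v \<noteq> 0 \<and>
     (\<forall>a b. a \<le> b \<and> il a b = il x y \<and> \<phi> (e_elem x y) a b \<noteq> 0 \<longrightarrow> a = u \<and> b = v) \<and>
     (\<forall>d\<in>incidence_algebra. (\<forall>a b. a \<noteq> b \<longrightarrow> d a b = 0) \<longrightarrow> d x x - d y y = \<phi> d u u - \<phi> d v v)"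

lemma main_pair:
  fixes \<phi> :: "('a::{order,finite} \<Rightarrow> 'a \<Rightarrow> 'k::field) \<Rightarrow> ('a \<Rightarrow> 'a \<Rightarrow> 'k)"
  assumes A: "lie_automorphism \<phi>" and xy: "x < y"
  shows "\<exists>u v. goodp \<phi> x y u v"
proof -
  let ?A = "incidence_algebra :: ('a \<Rightarrow> 'a \<Rightarrow> 'k) set"
  define i where "i = il x y"
  have i1: "1 \<le> i" unfolding i_def using il_pos[OF xy] .
  define f where "f = \<phi> (e_elem x y)"
  have eA: "e_elem x y \<in> ?A" using e_IA[OF less_imp_le[OF xy]] .
  have fJ: "f \<in> Jk i" unfolding f_def using pres[OF auto_endo[OF A] e_J[OF less_imp_le[OF xy]]] i_def by simp
  have bij: "bij_betw \<phi> ?A ?A" using A unfolding lie_automorphism_def by auto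
  have notJ: "f \<notin> Jk (Suc i)"
  proof
    assume "f \<in> Jk (Suc i)"
    then have "inv_into ?A \<phi> f \<in> Jk (Suc i)" using pres[OF inv_endo[OF A]] by blast
    moreover have "inv_into ?A \<phi> f = e_elem x y" unfolding f_def using bij eA
      by (simp add: bij_betw_def inv_into_f_f)
    ultimately have "e_elem x y \<in> (Jk (Suc i) :: ('a \<Rightarrow> 'a \<Rightarrow> 'k) set)" by simp
    then have "Suc i \<le> il x y" unfolding Jk_def by (auto simp: e_eq)
    then show False unfolding i_def by simp
  qed
  then obtain u v where uv0: "f u v \<noteq> 0" "\<not> (u \<le> v \<and> Suc i \<le> il u v)" unfolding Jk_def by blast
  then have uv: "u \<le> v" "il u v = i" using fJ unfolding Jk_def by force+
  have "u \<noteq> v" using uv i1 il_refl[of u] by auto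
  then have "u < v" using uv by auto
  have key: "d x x - d y y = \<phi> d a a - \<phi> d b b"
    if d: "d \<in> ?A" "\<forall>a b. a \<noteq> b \<longrightarrow> d a b = 0" and ab: "a \<le> b" "il a b = i" "f a b \<noteq> 0" for d a b
  proof -
    have pdA: "\<phi> d \<in> ?A" using A d(1) unfolding lie_automorphism_def bij_betw_def by auto
    have "\<phi> (lie_bracket d (e_elem x y)) = lie_bracket (\<phi> d) f"
      using A d(1) eA unfolding lie_automorphism_def f_def by auto
    moreover have "\<phi> (lie_bracket d (e_elem x y)) = inc_scale (d x x - d y y) f"
      using lb_diag[OF d(2) xy] A eA unfolding lie_automorphism_def f_def by auto
    ultimately have "inc_scale (d x x - d y y) f a b = lie_bracket (\<phi> d) f a b" by simp
    also have "\<dots> = (\<phi> d a a - \<phi> d b b) * f a b" using lb_comp[OF pdA fJ i1 ab(1,2)] .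
    finally have "(d x x - d y y) * f a b = (\<phi> d a a - \<phi> d b b) * f a b" unfolding inc_scale_def .
    then show ?thesis using ab(3) by simp
  qed
  have uniq: "a = u \<and> b = v" if ab: "a \<le> b" "il a b = i" "f a b \<noteq> 0" for a b
  proof -
    have "a \<noteq> b" using ab i1 il_refl[of a] by auto
    then have "a < b" using ab by auto
    have "\<forall>h::'a \<Rightarrow> 'k. h u - h v = h a - h b"
    proof
      fix h :: "'a \<Rightarrow> 'k"
      obtain d where d: "d \<in> ?A" "\<forall>a b. a \<noteq> b \<longrightarrow> d a b = 0" "\<forall>z. \<phi> d z z = h z"
        using diag_surj[OF A] by blast
      have "h u - h v = d x x - d y y" using key[OF d(1,2) uv uv0(1)] d(3) by simp
      also have "\<dots> = h a - h b" using key[OF d(1,2) ab] d(3) by simp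
      finally show "h u - h v = h a - h b" .
    qed
    then show ?thesis using uniq_pair[OF \<open>u < v\<close> \<open>a < b\<close>] by auto
  qed
  have "goodp \<phi> x y u v" unfolding goodp_def
    using \<open>u < v\<close> uv uv0(1) uniq key[OF _ _ uv uv0(1)] unfolding f_def i_def by blast
  then show ?thesis by blast
qed



lemma phi_tilde_e:
  fixes \<phi> :: "('a::{order,finite} \<Rightarrow> 'a \<Rightarrow> 'k::field) \<Rightarrow> ('a \<Rightarrow> 'a \<Rightarrow> 'k)"
  assumes "x \<le> y"
  shows "phi_tilde \<phi> (e_elem x y) = L_comp (il x y) (\<phi> (e_elem x y))"
proof (intro ext)
  fix u v
  have "phi_tilde \<phi> (e_elem x y) u v = (\<Sum>p\<in>{(x,y). x \<le> y}. if p = (x,y) then L_comp (il x y) (\<phi> (e_elem x y)) u v else 0)"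
    unfolding phi_tilde_def by (intro sum.cong) (auto simp: e_eq)
  also have "\<dots> = L_comp (il x y) (\<phi> (e_elem x y)) u v" using assms by (subst sum.delta) auto
  finally show "phi_tilde \<phi> (e_elem x y) u v = L_comp (il x y) (\<phi> (e_elem x y)) u v" .
qed

lemma B_fin: "finite (B_set :: ('a::{order,finite} \<Rightarrow> 'a \<Rightarrow> 'k::field) set)"
proof -
  have "(B_set :: ('a \<Rightarrow> 'a \<Rightarrow> 'k) set) \<subseteq> (\<lambda>p. e_elem (fst p) (snd p)) ` UNIV"
  proof
    fix g assume "g \<in> (B_set :: ('a \<Rightarrow> 'a \<Rightarrow> 'k) set)"
    then obtain x y where "g = e_elem x y" unfolding B_set_def by auto
    then show "g \<in> (\<lambda>p. e_elem (fst p) (snd p)) ` UNIV" by (intro image_eqI[where x="(x,y)"]) auto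
  qed
  then show ?thesis by (rule finite_subset) simp
qed

lemma goodpD:
  assumes "goodp \<phi> x y u v"
  shows "u < v" "il u v = il x y" "\<phi> (e_elem x y) u v \<noteq> 0"
    "\<And>a b. a \<le> b \<Longrightarrow> il a b = il x y \<Longrightarrow> \<phi> (e_elem x y) a b \<noteq> 0 \<Longrightarrow> a = u \<and> b = v"
    "\<And>d. d \<in> incidence_algebra \<Longrightarrow> (\<forall>a b. a \<noteq> b \<longrightarrow> d a b = 0) \<Longrightarrow> d x x - d y y = \<phi> d u u - \<phi> d v v"
  using assms unfolding goodp_def by blast+

theorem lemma4p3:
  fixes \<phi> :: "('a::{order,finite} \<Rightarrow> 'a \<Rightarrow> 'k::field) \<Rightarrow> ('a \<Rightarrow> 'a \<Rightarrow> 'k)"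
  assumes "poset_connected TYPE('a)"
    and "lie_automorphism \<phi>"
  shows "\<exists>(\<theta> :: ('a \<Rightarrow> 'a \<Rightarrow> 'k) \<Rightarrow> ('a \<Rightarrow> 'a \<Rightarrow> 'k)) (\<sigma> :: 'a \<Rightarrow> 'a \<Rightarrow> 'k).
           bij_betw \<theta> B_set B_set \<and>
           (\<forall>i\<ge>1. \<theta> ` B_i i \<subseteq> B_i i) \<and>
           (\<forall>x y. x < y \<longrightarrow> \<sigma> x y \<noteq> 0) \<and>
           (\<forall>x y. x < y \<longrightarrow> phi_tilde \<phi> (e_elem x y) = inc_scale (\<sigma> x y) (\<theta> (e_elem x y)))"
proof -
  have A: "lie_automorphism \<phi>" by fact
  have "\<forall>p. \<exists>q. fst p < snd p \<longrightarrow> goodp \<phi> (fst p) (snd p) (fst q) (snd q)"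
  proof
    fix p :: "'a \<times> 'a"
    show "\<exists>q. fst p < snd p \<longrightarrow> goodp \<phi> (fst p) (snd p) (fst q) (snd q)"
    proof (cases "fst p < snd p")
      case True
      then obtain u v where "goodp \<phi> (fst p) (snd p) u v" using main_pair[OF A] by blast
      then show ?thesis by (intro exI[of _ "(u,v)"]) simp
    qed simp
  qed
  then have "\<exists>F. \<forall>p. fst p < snd p \<longrightarrow> goodp \<phi> (fst p) (snd p) (fst (F p)) (snd (F p))"
    by (rule choice)
  then obtain F where F: "\<forall>p. fst p < snd p \<longrightarrow> goodp \<phi> (fst p) (snd p) (fst (F p)) (snd (F p))" ..
  define U where "U x y = fst (F (x,y))" for x y
  define V where "V x y = snd (F (x,y))" for x y
  have G: "goodp \<phi> x y (U x y) (V x y)" if "x < y" for x y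
    using F[rule_format, of "(x,y)"] that unfolding U_def V_def by simp
  define pr where "pr g = (SOME p. fst p < snd p \<and> g = (e_elem (fst p) (snd p) :: 'a \<Rightarrow> 'a \<Rightarrow> 'k))" for g
  define \<theta> where "\<theta> g = (e_elem (U (fst (pr g)) (snd (pr g))) (V (fst (pr g)) (snd (pr g))) :: 'a \<Rightarrow> 'a \<Rightarrow> 'k)" for g
  define \<sigma> where "\<sigma> x y = \<phi> (e_elem x y) (U x y) (V x y)" for x y
  have pr_e: "pr (e_elem x y) = (x, y)" if "x < y" for x y
    unfolding pr_def
  proof (rule some_equality)
    show "fst (x, y) < snd (x, y) \<and> e_elem x y = (e_elem (fst (x, y)) (snd (x, y)) :: 'a \<Rightarrow> 'a \<Rightarrow> 'k)" using that by simp
  next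
    fix p assume "fst p < snd p \<and> (e_elem x y :: 'a \<Rightarrow> 'a \<Rightarrow> 'k) = e_elem (fst p) (snd p)"
    then have "(e_elem x y :: 'a \<Rightarrow> 'a \<Rightarrow> 'k) = e_elem (fst p) (snd p)" by simp
    then have "x = fst p \<and> y = snd p" by (rule e_inj)
    then show "p = (x, y)" by (cases p) simp
  qed
  have th: "\<theta> (e_elem x y) = e_elem (U x y) (V x y)" if "x < y" for x y
    unfolding \<theta>_def using pr_e[OF that] by simp
  have UV: "U x y < V x y" "il (U x y) (V x y) = il x y" if "x < y" for x y
    using goodpD(1,2)[OF G[OF that]] by auto
  have img: "\<theta> ` B_set \<subseteq> B_set"
  proof
    fix g assume "g \<in> \<theta> ` B_set"
    then obtain x y where xy: "x < y" "g = \<theta> (e_elem x y)" unfolding B_set_def by auto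
    have "e_elem (U x y) (V x y) \<in> (B_set :: ('a \<Rightarrow> 'a \<Rightarrow> 'k) set)"
      unfolding B_set_def using UV[OF xy(1)] by blast
    then show "g \<in> B_set" using xy th by simp
  qed
  have inj: "inj_on \<theta> B_set"
  proof (rule inj_onI)
    fix g g' assume g: "g \<in> B_set" and g': "g' \<in> B_set" and eq: "\<theta> g = \<theta> g'"
    obtain x y where xy: "x < y" "g = e_elem x y" using g unfolding B_set_def by auto
    obtain x' y' where xy': "x' < y'" "g' = e_elem x' y'" using g' unfolding B_set_def by auto
    have "e_elem (U x y) (V x y) = (e_elem (U x' y') (V x' y') :: 'a \<Rightarrow> 'a \<Rightarrow> 'k)"
      using eq th xy xy' by simp
    then have u0: "U x y = U x' y' \<and> V x y = V x' y'" by (rule e_inj)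
    then have u: "U x y = U x' y'" "V x y = V x' y'" by simp_all
    have "\<forall>h::'a \<Rightarrow> 'k. h x - h y = h x' - h y'"
    proof
      fix h :: "'a \<Rightarrow> 'k"
      define d where "d = (\<lambda>a b::'a. if a = b then h a else 0)"
      have dA: "d \<in> incidence_algebra" unfolding d_def incidence_algebra_def by auto
      have dd: "\<forall>a b. a \<noteq> b \<longrightarrow> d a b = 0" unfolding d_def by simp
      have "d x x - d y y = \<phi> d (U x y) (U x y) - \<phi> d (V x y) (V x y)"
        using goodpD(5)[OF G[OF xy(1)] dA dd] .
      also have "\<dots> = d x' x' - d y' y'"
        using goodpD(5)[OF G[OF xy'(1)] dA dd] u by simp
      finally show "h x - h y = h x' - h y'" unfolding d_def by simp
    qed
    then have "x = x' \<and> y = y'" using uniq_pair[OF xy(1) xy'(1)] by blast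
    then show "g = g'" using xy xy' by simp
  qed
  have bij: "bij_betw \<theta> B_set B_set"
    unfolding bij_betw_def using inj endo_inj_surj[OF B_fin img inj] by simp
  have Bi: "\<theta> ` B_i i \<subseteq> B_i i" for i
  proof
    fix g assume "g \<in> \<theta> ` B_i i"
    then obtain x y where xy: "x < y" "i \<le> il x y" "g = \<theta> (e_elem x y)" unfolding B_i_def by auto
    have "e_elem (U x y) (V x y) \<in> (B_i i :: ('a \<Rightarrow> 'a \<Rightarrow> 'k) set)"
      unfolding B_i_def
      by (rule CollectI, rule exI[of _ "U x y"], rule exI[of _ "V x y"]) (use UV[OF xy(1)] xy(2) in simp)
    then show "g \<in> B_i i" using xy(3) th[OF xy(1)] by simp
  qed
  have sig: "\<sigma> x y \<noteq> 0" if "x < y" for x y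
    using goodpD(3)[OF G[OF that]] unfolding \<sigma>_def .
  have pt: "phi_tilde \<phi> (e_elem x y) = inc_scale (\<sigma> x y) (\<theta> (e_elem x y))" if xy: "x < y" for x y
  proof -
    have g: "goodp \<phi> x y (U x y) (V x y)" using G[OF xy] .
    have "L_comp (il x y) (\<phi> (e_elem x y)) = inc_scale (\<sigma> x y) (e_elem (U x y) (V x y))"
    proof (intro ext)
      fix a b
      show "L_comp (il x y) (\<phi> (e_elem x y)) a b = inc_scale (\<sigma> x y) (e_elem (U x y) (V x y)) a b"
      proof (cases "a = U x y \<and> b = V x y")
        case True
        then show ?thesis using goodpD(1,2)[OF g] unfolding L_comp_def inc_scale_def \<sigma>_def
          by (auto simp: e_eq)
      next
        case False
        then have "\<not> (a \<le> b \<and> il a b = il x y \<and> \<phi> (e_elem x y) a b \<noteq> 0)"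
          using goodpD(4)[OF g] by blast
        then show ?thesis using False unfolding L_comp_def inc_scale_def e_eq by auto
      qed
    qed
    then show ?thesis using phi_tilde_e[where \<phi>=\<phi>, OF less_imp_le[OF xy]] th[OF xy] by simp
  qed
  have "bij_betw \<theta> B_set B_set \<and>
           (\<forall>i\<ge>1. \<theta> ` B_i i \<subseteq> B_i i) \<and>
           (\<forall>x y. x < y \<longrightarrow> \<sigma> x y \<noteq> 0) \<and>
           (\<forall>x y. x < y \<longrightarrow> phi_tilde \<phi> (e_elem x y) = inc_scale (\<sigma> x y) (\<theta> (e_elem x y)))"
  proof (intro conjI allI impI)
    show "bij_betw \<theta> B_set B_set" by (rule bij)
    fix i :: nat show "\<theta> ` B_i i \<subseteq> B_i i" by (rule Bi)
  next
    fix x y :: 'a assume "x < y"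
    then show "\<sigma> x y \<noteq> 0" by (rule sig)
  next
    fix x y :: 'a assume "x < y"
    then show "phi_tilde \<phi> (e_elem x y) = inc_scale (\<sigma> x y) (\<theta> (e_elem x y))" by (rule pt)
  qed
  then show ?thesis by blast
qed


end
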